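(* Let $G$ be a path-connected $H$-space and let $f,g\colon G\times G\to G$ be continuous maps. Then $\mathrm{D}(f,g)\leq \mathrm{cat}(G)$.
   Context: An $H$-space is a topological space $G$ together with continuous maps $\mu\colon G\times G\to G$ (multiplication) and $\delta\colon G\times G\to G$ (division) and an element $x_0\in G$ such that the map $G\times G\to G$, $(x,y)\mapsto \mu(x,\delta(x,y))$, is homotopic to the second projection $p_2$, and the map $x\mapsto\mu(x,x_0)$ is homotopic to $\mathrm{id}_G$ (associativity is not required). For continuous maps $f,g\colon X\to Y$, the homotopic distance $\mathrm{D}(f,g)$ is the least integer $n\geq 0$ such that there is an open cover $\{U_0,\dots,U_n\}$ of $X$ with $f|_{U_j}\simeq g|_{U_j}$ for all $j$ ($\infty$ if none exists). For a path-connected space $X$, $\mathrm{cat}(X)$ is the least integer $n\geq 0$ such that $X$ can be covered by $n+1$ open sets whose inclusions into $X$ are null-homotopic. *)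

theory Defs
  imports "HOL-Analysis.Analysis" "HOL-Library.Extended_Nat"
begin

definition H_space :: "'a topology \<Rightarrow> ('a \<times> 'a \<Rightarrow> 'a) \<Rightarrow> ('a \<times> 'a \<Rightarrow> 'a) \<Rightarrow> 'a \<Rightarrow> bool" where
  "H_space G mu delta x0 \<longleftrightarrow>
     continuous_map (prod_topology G G) G mu \<and>
     continuous_map (prod_topology G G) G delta \<and>
     x0 \<in> topspace G \<and>
     homotopic_with (\<lambda>_. True) (prod_topology G G) G (\<lambda>(x,y). mu (x, delta (x,y))) snd \<and>
     homotopic_with (\<lambda>_. True) G G (\<lambda>x. mu (x, x0)) id"

definition homotopic_distance :: "'a topology \<Rightarrow> 'b topology \<Rightarrow> ('a \<Rightarrow> 'b) \<Rightarrow> ('a \<Rightarrow> 'b) \<Rightarrow> enat" where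
  "homotopic_distance X Y f g =
     (INF n \<in> {n::nat. \<exists>U. (\<forall>j\<le>n. openin X (U j)) \<and> (\<Union>j\<le>n. U j) = topspace X \<and>
                 (\<forall>j\<le>n. homotopic_with (\<lambda>_. True) (subtopology X (U j)) Y f g)}. enat n)"

definition LS_cat :: "'a topology \<Rightarrow> enat" where
  "LS_cat X =
     (INF n \<in> {n::nat. \<exists>U. (\<forall>j\<le>n. openin X (U j)) \<and> (\<Union>j\<le>n. U j) = topspace X \<and>
                 (\<forall>j\<le>n. \<exists>c. homotopic_with (\<lambda>_. True) (subtopology X (U j)) X id (\<lambda>_. c))}. enat n)"

end

theory Submission
  imports Defs
begin

lemma key_hom:
  assumes pc: "path_connected_space G"
    and H: "H_space G mu delta x0"
    and cf: "continuous_map X G f" and cg: "continuous_map X G g"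
    and hU: "homotopic_with (\<lambda>_. True) (subtopology G U) G id (\<lambda>_. c)"
  shows "homotopic_with (\<lambda>_. True) (subtopology X {x \<in> topspace X. delta (f x, g x) \<in> U}) G f g"
proof -
  define V where "V = {x \<in> topspace X. delta (f x, g x) \<in> U}"
  let ?XV = "subtopology X V"
  have cmu: "continuous_map (prod_topology G G) G mu"
    and cdel: "continuous_map (prod_topology G G) G delta"
    and x0: "x0 \<in> topspace G"
    and h1: "homotopic_with (\<lambda>_. True) (prod_topology G G) G (\<lambda>(x,y). mu (x, delta (x,y))) snd"
    and h2: "homotopic_with (\<lambda>_. True) G G (\<lambda>x. mu (x, x0)) id"
    using H unfolding H_space_def by auto
  have cfV: "continuous_map ?XV G f" and cgV: "continuous_map ?XV G g"
    using cf cg continuous_map_from_subtopology by blast+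
  have cfg: "continuous_map ?XV (prod_topology G G) (\<lambda>x. (f x, g x))"
    using cfV cgV by (simp add: continuous_map_pairwise o_def)
  have cphi: "continuous_map ?XV G (\<lambda>x. delta (f x, g x))"
    using continuous_map_compose[OF cfg cdel] by (simp add: o_def)
  have cphiU: "continuous_map ?XV (subtopology G U) (\<lambda>x. delta (f x, g x))"
    using cphi by (auto simp: continuous_map_in_subtopology V_def)
  have hphi: "homotopic_with (\<lambda>_. True) ?XV G (\<lambda>x. delta (f x, g x)) (\<lambda>_. c)"
    using homotopic_with_compose_continuous_map_right[OF hU cphiU, of "\<lambda>_. True"]
    by (simp add: o_def)
  have cdiag: "continuous_map ?XV (prod_topology ?XV ?XV) (\<lambda>x. (x, x))"
    by (simp add: continuous_map_pairwise o_def)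
  have A: "homotopic_with (\<lambda>_. True) ?XV G (\<lambda>x. mu (f x, delta (f x, g x))) g"
    using homotopic_with_compose_continuous_map_right[OF h1 cfg, of "\<lambda>_. True"]
    by (simp add: o_def)
  have B: "homotopic_with (\<lambda>_. True) ?XV G (\<lambda>x. mu (f x, delta (f x, g x))) (\<lambda>x. mu (f x, c))"
  proof -
    have "homotopic_with (\<lambda>_. True) (prod_topology ?XV ?XV) (prod_topology G G)
      (\<lambda>z. (f (fst z), delta (f (snd z), g (snd z)))) (\<lambda>z. (f (fst z), c))"
      by (rule homotopic_with_prod_topology[OF _ hphi]) (use cfV in auto)
    from homotopic_with_compose_continuous_map_right[OF this cdiag, of "\<lambda>_. True"]
    have "homotopic_with (\<lambda>_. True) ?XV (prod_topology G G)
      (\<lambda>x. (f x, delta (f x, g x))) (\<lambda>x. (f x, c))" by (simp add: o_def)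
    from homotopic_with_compose_continuous_map_left[OF this cmu, of "\<lambda>_. True"]
    show ?thesis by (simp add: o_def)
  qed
  have C: "homotopic_with (\<lambda>_. True) ?XV G (\<lambda>x. mu (f x, c)) (\<lambda>x. mu (f x, x0))"
  proof (cases "topspace ?XV = {}")
    case True
    then have "?XV = trivial_topology" using True by (subst null_topspace_iff_trivial[symmetric]) assumption
    then show ?thesis by (simp add: homotopic_on_empty)
  next
    case False
    then obtain x where "x \<in> topspace ?XV" by blast
    then have "delta (f x, g x) \<in> U" by (simp add: V_def)
    moreover have "continuous_map (subtopology G U) G (\<lambda>_. c)"
      using homotopic_with_imp_continuous_maps[OF hU] by simp
    moreover have "delta (f x, g x) \<in> topspace (subtopology G U)"
      using continuous_map_image_subset_topspace[OF cphiU] \<open>x \<in> topspace ?XV\<close> by blast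
    then have "subtopology G U \<noteq> trivial_topology"
      by (metis empty_iff null_topspace_iff_trivial)
    ultimately have cin: "c \<in> topspace G"
      unfolding continuous_map_const by blast
    have hc: "homotopic_with (\<lambda>_. True) ?XV G (\<lambda>_. c) (\<lambda>_. x0)"
      using pc cin x0 by (simp add: homotopic_constant_maps path_connected_space_iff_path_component)
    have "homotopic_with (\<lambda>_. True) (prod_topology ?XV ?XV) (prod_topology G G)
      (\<lambda>z. (f (fst z), c)) (\<lambda>z. (f (fst z), x0))"
      by (rule homotopic_with_prod_topology[OF _ hc]) (use cfV in auto)
    from homotopic_with_compose_continuous_map_right[OF this cdiag, of "\<lambda>_. True"]
    have "homotopic_with (\<lambda>_. True) ?XV (prod_topology G G)
      (\<lambda>x. (f x, c)) (\<lambda>x. (f x, x0))" by (simp add: o_def)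
    from homotopic_with_compose_continuous_map_left[OF this cmu, of "\<lambda>_. True"]
    show ?thesis by (simp add: o_def)
  qed
  have D: "homotopic_with (\<lambda>_. True) ?XV G (\<lambda>x. mu (f x, x0)) f"
    using homotopic_with_compose_continuous_map_right[OF h2 cfV, of "\<lambda>_. True"]
    by (simp add: o_def)
  have "homotopic_with (\<lambda>_. True) ?XV G f g"
    using homotopic_with_trans[OF homotopic_with_symD[OF D]
          homotopic_with_trans[OF homotopic_with_symD[OF C] homotopic_with_trans[OF homotopic_with_symD[OF B] A]]] .
  then show ?thesis by (simp add: V_def)
qed

theorem theorem4p1:
  fixes G :: "'a topology" and mu delta f g :: "'a \<times> 'a \<Rightarrow> 'a" and x0 :: 'a
  assumes "path_connected_space G"
    and "H_space G mu delta x0"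
    and "continuous_map (prod_topology G G) G f"
    and "continuous_map (prod_topology G G) G g"
  shows "homotopic_distance (prod_topology G G) G f g \<le> LS_cat G"
proof -
  let ?X = "prod_topology G G"
  have cdel: "continuous_map ?X G delta" using assms(2) unfolding H_space_def by auto
  have cphi: "continuous_map ?X G (\<lambda>x. delta (f x, g x))"
    using continuous_map_compose[OF continuous_map_pairedI[OF assms(3) assms(4)] cdel]
    by (simp add: o_def)
  have hn: "homotopic_distance ?X G f g \<le> enat n"
    if n: "n \<in> {n::nat. \<exists>U. (\<forall>j\<le>n. openin G (U j)) \<and> (\<Union>j\<le>n. U j) = topspace G \<and>
                 (\<forall>j\<le>n. \<exists>c. homotopic_with (\<lambda>_. True) (subtopology G (U j)) G id (\<lambda>_. c))}" for n
  proof -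
    from n obtain U where op: "\<forall>j\<le>n. openin G (U j)" and cov: "(\<Union>j\<le>n. U j) = topspace G"
      and hom: "\<forall>j\<le>n. \<exists>c. homotopic_with (\<lambda>_. True) (subtopology G (U j)) G id (\<lambda>_. c)" by blast
    define V where "V j = {x \<in> topspace ?X. delta (f x, g x) \<in> U j}" for j
    have o1: "\<forall>j\<le>n. openin ?X (V j)"
    proof (intro allI impI)
      fix j assume "j \<le> n"
      then have "openin G (U j)" using op by blast
      from openin_continuous_map_preimage[OF cphi this] show "openin ?X (V j)"
        unfolding V_def .
    qed
    have o2: "(\<Union>j\<le>n. V j) = topspace ?X"
    proof
      show "(\<Union>j\<le>n. V j) \<subseteq> topspace ?X" by (auto simp: V_def)
      show "topspace ?X \<subseteq> (\<Union>j\<le>n. V j)"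
      proof
        fix x assume x: "x \<in> topspace ?X"
        then have "delta (f x, g x) \<in> topspace G" using continuous_map_image_subset_topspace[OF cphi] by blast
        then obtain j where "j \<le> n" "delta (f x, g x) \<in> U j" using cov by blast
        then show "x \<in> (\<Union>j\<le>n. V j)" using x by (auto simp: V_def)
      qed
    qed
    have o3: "\<forall>j\<le>n. homotopic_with (\<lambda>_. True) (subtopology ?X (V j)) G f g"
    proof (intro allI impI)
      fix j assume "j \<le> n"
      then obtain c where "homotopic_with (\<lambda>_. True) (subtopology G (U j)) G id (\<lambda>_. c)" using hom by blast
      from key_hom[OF assms(1,2,3,4) this] show "homotopic_with (\<lambda>_. True) (subtopology ?X (V j)) G f g"
        by (simp add: V_def)
    qed
    have "n \<in> {n::nat. \<exists>U. (\<forall>j\<le>n. openin ?X (U j)) \<and> (\<Union>j\<le>n. U j) = topspace ?X \<and>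
                 (\<forall>j\<le>n. homotopic_with (\<lambda>_. True) (subtopology ?X (U j)) G f g)}"
      by (intro CollectI exI[where x=V] conjI o1 o2 o3)
    then show ?thesis unfolding homotopic_distance_def by (rule INF_lower)
  qed
  show ?thesis unfolding LS_cat_def by (rule INF_greatest, rule hn)
qed

end
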